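(* Assume (A3) as in the context. For a fixed weight $w\in[0,1]$, the MSE of the sample-split estimator $\widehat\tau_w$ equals $$\frac{2w^2}{|\mathcal D_e|}\mathrm{Var}(\psi_e(O_e))+\frac{2(1-w)^2}{|\mathcal D_e|}\mathrm{Var}(\psi_{h,1}(O_e))+\frac{2(1-w)^2}{|\mathcal D_h|}\mathrm{Var}(\psi_{h,2}(O_h))+\frac{4w(1-w)}{|\mathcal D_e|}\mathrm{Cov}(\psi_e(O_e),\psi_{h,1}(O_e))+(1-w)^2b_h^2.$$
   Context: Setting. Experimental data $\mathcal{D}_e$: i.i.d. $O_e=(S_e,A_e,R_e)$, $A_e\in\{0,1\}$; independent historical data $\mathcal{D}_h$: i.i.d. $O_h=(S_h,R_h)$ under control. $\pi^*(a\mid s)=\mathbb{P}(A_e=a\mid S_e=s)$, $r_e^*(a,s)=\mathbb{E}(R_e\mid A_e=a,S_e=s)$, $r_h^*(s)=\mathbb{E}(R_h\mid S_h=s)$, $\mu^*$ = density ratio of $S_e$ over $S_h$; $\tau_e=\mathbb{E}[r_e^*(1,S_e)-r_e^*(0,S_e)]$. Working models $r_e,r_h,\pi,\mu$, $\nu^a(A_e\mid S_e)=\mathbb{I}(A_e=a)/\pi(a\mid S_e)$; $\psi_e(O_e)=\sum_{a=0}^1(-1)^{a-1}\{r_e(a,S_e)+\nu^a(A_e\mid S_e)[R_e-r_e(A_e,S_e)]\}$, $\psi_{h,1}(O_e)=r_e(1,S_e)+\nu^1(A_e\mid S_e)[R_e-r_e(A_e,S_e)]-r_h(S_e)$, $\psi_{h,2}(O_h)=\mu(S_h)[R_h-r_h(S_h)]$.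 $b_h=\mathbb{E}[r_e^*(0,S_e)]-\mathbb{E}[r_h^*(S_e)]$. Sample splitting: $\mathcal D_e,\mathcal D_h$ are each split into equal halves; $\widehat\tau_e$ = sample mean of $\psi_e$ over the second half of $\mathcal D_e$, $\widehat\tau_h$ = sample mean of $\psi_{h,1}$ over the second half of $\mathcal D_e$ minus sample mean of $\psi_{h,2}$ over the second half of $\mathcal D_h$, $\widehat\tau_w=w\widehat\tau_e+(1-w)\widehat\tau_h$, and $\mathrm{MSE}(\widehat\tau_w)=\mathbb{E}(\widehat\tau_w-\tau_e)^2$. (A3): either the reward functions ($r_e=r_e^*$, $r_h=r_h^*$) or the density ratios ($\pi=\pi^*$, $\mu=\mu^*$) are correctly specified. *)

theory Defs
  imports "HOL-Probability.Probability"
begin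

text \<open>Observations: experimental O_e = (S_e, A_e, R_e) :: 's \<times> bool \<times> real
  (A_e = True encodes treatment a = 1, False encodes a = 0);
  historical O_h = (S_h, R_h) :: 's \<times> real.\<close>

definition Var :: "'a measure \<Rightarrow> ('a \<Rightarrow> real) \<Rightarrow> real" where
  "Var M f = (\<integral>x. (f x - (\<integral>y. f y \<partial>M))\<^sup>2 \<partial>M)"

definition Cov :: "'a measure \<Rightarrow> ('a \<Rightarrow> real) \<Rightarrow> ('a \<Rightarrow> real) \<Rightarrow> real" where
  "Cov M f g = (\<integral>x. (f x - (\<integral>y. f y \<partial>M)) * (g x - (\<integral>y. g y \<partial>M)) \<partial>M)"

definition nu :: "(bool \<Rightarrow> 's \<Rightarrow> real) \<Rightarrow> bool \<Rightarrow> bool \<Rightarrow> 's \<Rightarrow> real" where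
  "nu pr a A s = (if A = a then 1 / pr a s else 0)"

definition psi_e :: "(bool \<Rightarrow> 's \<Rightarrow> real) \<Rightarrow> (bool \<Rightarrow> 's \<Rightarrow> real) \<Rightarrow> 's \<times> bool \<times> real \<Rightarrow> real" where
  "psi_e re pr ob =
     (case ob of (s, A, R) \<Rightarrow>
        (re True s + nu pr True A s * (R - re A s))
      - (re False s + nu pr False A s * (R - re A s)))"

definition psi_h1 :: "(bool \<Rightarrow> 's \<Rightarrow> real) \<Rightarrow> ('s \<Rightarrow> real) \<Rightarrow> (bool \<Rightarrow> 's \<Rightarrow> real)
    \<Rightarrow> 's \<times> bool \<times> real \<Rightarrow> real" where
  "psi_h1 re rh pr ob =
     (case ob of (s, A, R) \<Rightarrow> re True s + nu pr True A s * (R - re A s) - rh s)"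

definition psi_h2 :: "('s \<Rightarrow> real) \<Rightarrow> ('s \<Rightarrow> real) \<Rightarrow> 's \<times> real \<Rightarrow> real" where
  "psi_h2 rh mu ob = (case ob of (s, R) \<Rightarrow> mu s * (R - rh s))"

definition second_half_mean :: "nat \<Rightarrow> ('o \<Rightarrow> real) \<Rightarrow> (nat \<Rightarrow> 'o) \<Rightarrow> real" where
  "second_half_mean n f D = (\<Sum>i\<in>{n div 2..<n}. f (D i)) / real (card {n div 2..<n})"

definition tau_hat_e where
  "tau_hat_e ne re pr De = second_half_mean ne (psi_e re pr) De"

definition tau_hat_h where
  "tau_hat_h ne nh re rh pr mu De Dh =
     second_half_mean ne (psi_h1 re rh pr) De - second_half_mean nh (psi_h2 rh mu) Dh"

definition tau_hat_w where
  "tau_hat_w w ne nh re rh pr mu De Dh =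
     w * tau_hat_e ne re pr De + (1 - w) * tau_hat_h ne nh re rh pr mu De Dh"

definition data_law :: "nat \<Rightarrow> nat \<Rightarrow> 'e measure \<Rightarrow> 'h measure
    \<Rightarrow> ((nat \<Rightarrow> 'e) \<times> (nat \<Rightarrow> 'h)) measure" where
  "data_law ne nh Pe Ph = (\<Pi>\<^sub>M i\<in>{..<ne}. Pe) \<Otimes>\<^sub>M (\<Pi>\<^sub>M i\<in>{..<nh}. Ph)"

text \<open>re_star a s is a version of E(R_e | A_e = a, S_e = s): defining property of
  conditional expectation, tested on the generating sets {A_e = a, S_e in B}.\<close>
definition is_reward_fn_e :: "'s measure \<Rightarrow> ('s \<times> bool \<times> real) measure \<Rightarrow> (bool \<Rightarrow> 's \<Rightarrow> real) \<Rightarrow> bool" where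
  "is_reward_fn_e MSt Pe r \<longleftrightarrow>
     (\<forall>a. r a \<in> borel_measurable MSt) \<and>
     (\<forall>a B. B \<in> sets MSt \<longrightarrow>
        (\<integral>x. indicator {x. fst (snd x) = a \<and> fst x \<in> B} x * snd (snd x) \<partial>Pe)
      = (\<integral>x. indicator {x. fst (snd x) = a \<and> fst x \<in> B} x * r a (fst x) \<partial>Pe))"

text \<open>p a s is a version of P(A_e = a | S_e = s).\<close>
definition is_propensity :: "'s measure \<Rightarrow> ('s \<times> bool \<times> real) measure \<Rightarrow> (bool \<Rightarrow> 's \<Rightarrow> real) \<Rightarrow> bool" where
  "is_propensity MSt Pe p \<longleftrightarrow>
     (\<forall>a. p a \<in> borel_measurable MSt) \<and>
     (\<forall>a B. B \<in> sets MSt \<longrightarrow>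
        measure Pe {x \<in> space Pe. fst (snd x) = a \<and> fst x \<in> B}
      = (\<integral>x. indicator B (fst x) * p a (fst x) \<partial>Pe))"

text \<open>r s is a version of E(R_h | S_h = s).\<close>
definition is_reward_fn_h :: "'s measure \<Rightarrow> ('s \<times> real) measure \<Rightarrow> ('s \<Rightarrow> real) \<Rightarrow> bool" where
  "is_reward_fn_h MSt Ph r \<longleftrightarrow>
     r \<in> borel_measurable MSt \<and>
     (\<forall>B. B \<in> sets MSt \<longrightarrow>
        (\<integral>x. indicator B (fst x) * snd x \<partial>Ph) = (\<integral>x. indicator B (fst x) * r (fst x) \<partial>Ph))"

definition is_density_ratio :: "'s measure \<Rightarrow> ('s \<times> bool \<times> real) measure \<Rightarrow> ('s \<times> real) measure
    \<Rightarrow> ('s \<Rightarrow> real) \<Rightarrow> bool" where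
  "is_density_ratio MSt Pe Ph m \<longleftrightarrow>
     m \<in> borel_measurable MSt \<and> (\<forall>s. 0 \<le> m s) \<and>
     distr Pe MSt fst = density (distr Ph MSt fst) (\<lambda>s. ennreal (m s))"

end

theory Submission
  imports Defs
begin

lemma pim_prod_aux:
  fixes I :: "'i set" and M :: "'a measure" and g :: "'i \<Rightarrow> 'a \<Rightarrow> real"
  assumes M: "prob_space M" and I: "finite I" and g: "\<And>k. k \<in> I \<Longrightarrow> integrable M (g k)"
  shows "integrable (PiM I (\<lambda>_. M)) (\<lambda>x. \<Prod>k\<in>I. g k (x k))"
    "(\<integral>x. (\<Prod>k\<in>I. g k (x k)) \<partial>PiM I (\<lambda>_. M)) = (\<Prod>k\<in>I. integral\<^sup>L M (g k))"
proof -
  interpret product_prob_space "\<lambda>_. M" I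
    by (simp add: product_prob_space_def product_prob_space_axioms_def product_sigma_finite_def M
        prob_space_imp_sigma_finite)
  show "integrable (PiM I (\<lambda>_. M)) (\<lambda>x. \<Prod>k\<in>I. g k (x k))"
    by (rule product_integrable_prod[OF I g])
  show "(\<integral>x. (\<Prod>k\<in>I. g k (x k)) \<partial>PiM I (\<lambda>_. M)) = (\<Prod>k\<in>I. integral\<^sup>L M (g k))"
    by (rule product_integral_prod[OF I g])
qed

lemma pim_single:
  fixes M :: "'a measure" and f :: "'a \<Rightarrow> real"
  assumes M: "prob_space M" and I: "finite I" "i \<in> I" and f: "integrable M f"
  shows "integrable (PiM I (\<lambda>_. M)) (\<lambda>x. f (x i))"
    "(\<integral>x. f (x i) \<partial>PiM I (\<lambda>_. M)) = integral\<^sup>L M f"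
proof -
  define g where "g k = (if k = i then f else (\<lambda>_. 1::real))" for k
  have gi: "\<And>k. k \<in> I \<Longrightarrow> integrable M (g k)"
    using f M by (simp add: g_def finite_measure.integrable_const prob_space_def)
  have eq: "(\<Prod>k\<in>I. g k (x k)) = f (x i)" for x
  proof -
    have "(\<Prod>k\<in>I. g k (x k)) = g i (x i) * (\<Prod>k\<in>I-{i}. g k (x k))" using I by (simp add: prod.remove)
    also have "(\<Prod>k\<in>I-{i}. g k (x k)) = 1" by (intro prod.neutral) (auto simp: g_def)
    finally show ?thesis by (simp add: g_def)
  qed
  have one: "integral\<^sup>L M (\<lambda>_. 1::real) = 1" using M by (simp add: prob_space.prob_space)
  show "integrable (PiM I (\<lambda>_. M)) (\<lambda>x. f (x i))"
    using pim_prod_aux(1)[of M I g] M I gi by (simp add: eq)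
  show "(\<integral>x. f (x i) \<partial>PiM I (\<lambda>_. M)) = integral\<^sup>L M f"
  proof -
    have eq2: "(\<Prod>k\<in>I. integral\<^sup>L M (g k)) = integral\<^sup>L M f"
    proof -
      have "(\<Prod>k\<in>I. integral\<^sup>L M (g k)) = integral\<^sup>L M (g i) * (\<Prod>k\<in>I-{i}. integral\<^sup>L M (g k))"
        using I by (simp add: prod.remove)
      also have "(\<Prod>k\<in>I-{i}. integral\<^sup>L M (g k)) = 1" by (intro prod.neutral) (use M in \<open>auto simp: g_def prob_space.prob_space\<close>)
      finally show ?thesis by (simp add: g_def)
    qed
    show ?thesis using pim_prod_aux(2)[of M I g] M I gi by (simp only: eq eq2)
  qed
qed

lemma pim_pair:
  fixes M :: "'a measure" and f g :: "'a \<Rightarrow> real"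
  assumes M: "prob_space M" and I: "finite I" "i \<in> I" "j \<in> I" "i \<noteq> j"
    and f: "integrable M f" and g: "integrable M g"
  shows "integrable (PiM I (\<lambda>_. M)) (\<lambda>x. f (x i) * g (x j))"
    "(\<integral>x. f (x i) * g (x j) \<partial>PiM I (\<lambda>_. M)) = integral\<^sup>L M f * integral\<^sup>L M g"
proof -
  define h where "h k = (if k = i then f else if k = j then g else (\<lambda>_. 1::real))" for k
  have hi: "\<And>k. k \<in> I \<Longrightarrow> integrable M (h k)"
    using f g M by (simp add: h_def finite_measure.integrable_const prob_space_def)
  have pr: "(\<Prod>k\<in>I. H k) = H i * H j" if "\<And>k. k \<in> I \<Longrightarrow> k \<noteq> i \<Longrightarrow> k \<noteq> j \<Longrightarrow> H k = 1" for H :: "'b \<Rightarrow> real"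
  proof -
    have "(\<Prod>k\<in>I. H k) = H i * (\<Prod>k\<in>I - {i}. H k)" using I by (simp add: prod.remove)
    also have "(\<Prod>k\<in>I - {i}. H k) = H j * (\<Prod>k\<in>I - {i} - {j}. H k)" using I by (simp add: prod.remove)
    also have "(\<Prod>k\<in>I - {i} - {j}. H k) = 1" using that by (intro prod.neutral) auto
    finally show ?thesis by simp
  qed
  have eq: "(\<Prod>k\<in>I. h k (x k)) = f (x i) * g (x j)" for x
    by (subst pr) (use I in \<open>auto simp: h_def\<close>)
  have eq2: "(\<Prod>k\<in>I. integral\<^sup>L M (h k)) = integral\<^sup>L M f * integral\<^sup>L M g"
    by (subst pr) (use I M in \<open>auto simp: h_def prob_space.prob_space\<close>)
  show "integrable (PiM I (\<lambda>_. M)) (\<lambda>x. f (x i) * g (x j))"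
    using pim_prod_aux(1)[of M I h] M I hi by (simp add: eq)
  show "(\<integral>x. f (x i) * g (x j) \<partial>PiM I (\<lambda>_. M)) = integral\<^sup>L M f * integral\<^sup>L M g"
    using pim_prod_aux(2)[of M I h] M I hi by (simp add: eq eq2)
qed

lemma pim_sumsq:
  fixes M :: "'a measure" and f :: "'a \<Rightarrow> real"
  assumes M: "prob_space M" and I: "finite I" "J \<subseteq> I"
    and f: "integrable M f" and f2: "integrable M (\<lambda>y. (f y)\<^sup>2)" and f0: "integral\<^sup>L M f = 0"
  shows "integrable (PiM I (\<lambda>_. M)) (\<lambda>x. (\<Sum>i\<in>J. f (x i))\<^sup>2)"
    "(\<integral>x. (\<Sum>i\<in>J. f (x i))\<^sup>2 \<partial>PiM I (\<lambda>_. M)) = real (card J) * integral\<^sup>L M (\<lambda>y. (f y)\<^sup>2)"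
    "integrable (PiM I (\<lambda>_. M)) (\<lambda>x. \<Sum>i\<in>J. f (x i))"
    "(\<integral>x. (\<Sum>i\<in>J. f (x i)) \<partial>PiM I (\<lambda>_. M)) = 0"
proof -
  have J: "finite J" using I finite_subset by blast
  have T: "integrable (PiM I (\<lambda>_. M)) (\<lambda>x. f (x i) * f (x j)) \<and>
      (\<integral>x. f (x i) * f (x j) \<partial>PiM I (\<lambda>_. M)) = (if i = j then integral\<^sup>L M (\<lambda>y. (f y)\<^sup>2) else 0)"
    if "i \<in> J" "j \<in> J" for i j
  proof (cases "i = j")
    case True
    have e: "(\<lambda>x. f (x i) * f (x j)) = (\<lambda>x. (\<lambda>y. (f y)\<^sup>2) (x i))" using True by (simp add: power2_eq_square)
    show ?thesis unfolding e using pim_single[OF M I(1) _ f2, of i] that I True by auto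
  next
    case False
    show ?thesis using pim_pair[OF M I(1) _ _ False f f] that I False f0 by auto
  qed
  have sq: "(\<Sum>i\<in>J. f (x i))\<^sup>2 = (\<Sum>i\<in>J. \<Sum>j\<in>J. f (x i) * f (x j))" for x
    by (simp add: power2_eq_square sum_product)
  show "integrable (PiM I (\<lambda>_. M)) (\<lambda>x. (\<Sum>i\<in>J. f (x i))\<^sup>2)"
    unfolding sq using T by (intro Bochner_Integration.integrable_sum) auto
  have "(\<integral>x. (\<Sum>i\<in>J. f (x i))\<^sup>2 \<partial>PiM I (\<lambda>_. M))
      = (\<Sum>i\<in>J. \<Sum>j\<in>J. (\<integral>x. f (x i) * f (x j) \<partial>PiM I (\<lambda>_. M)))"
  proof -
    have Ti: "integrable (PiM I (\<lambda>_. M)) (\<lambda>x. \<Sum>j\<in>J. f (x i) * f (x j))" if "i \<in> J" for i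
      using T that by (intro Bochner_Integration.integrable_sum) auto
    have "(\<integral>x. (\<Sum>i\<in>J. \<Sum>j\<in>J. f (x i) * f (x j)) \<partial>PiM I (\<lambda>_. M))
       = (\<Sum>i\<in>J. (\<integral>x. (\<Sum>j\<in>J. f (x i) * f (x j)) \<partial>PiM I (\<lambda>_. M)))"
      using Ti by (rule Bochner_Integration.integral_sum)
    also have "\<dots> = (\<Sum>i\<in>J. \<Sum>j\<in>J. (\<integral>x. f (x i) * f (x j) \<partial>PiM I (\<lambda>_. M)))"
      using T by (intro sum.cong refl Bochner_Integration.integral_sum) auto
    finally show ?thesis unfolding sq .
  qed
  also have "\<dots> = (\<Sum>i\<in>J. \<Sum>j\<in>J. (if i = j then integral\<^sup>L M (\<lambda>y. (f y)\<^sup>2) else 0))"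
    using T by (intro sum.cong) auto
  also have "\<dots> = real (card J) * integral\<^sup>L M (\<lambda>y. (f y)\<^sup>2)"
    using J by simp
  finally show "(\<integral>x. (\<Sum>i\<in>J. f (x i))\<^sup>2 \<partial>PiM I (\<lambda>_. M)) = real (card J) * integral\<^sup>L M (\<lambda>y. (f y)\<^sup>2)" .
  have S: "integrable (PiM I (\<lambda>_. M)) (\<lambda>x. f (x i)) \<and> (\<integral>x. f (x i) \<partial>PiM I (\<lambda>_. M)) = 0" if "i \<in> J" for i
    using pim_single[OF M I(1) _ f, of i] that I f0 by auto
  show "integrable (PiM I (\<lambda>_. M)) (\<lambda>x. \<Sum>i\<in>J. f (x i))"
    using S by (intro Bochner_Integration.integrable_sum) auto
  show "(\<integral>x. (\<Sum>i\<in>J. f (x i)) \<partial>PiM I (\<lambda>_. M)) = 0"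
    using S by (subst Bochner_Integration.integral_sum) auto
qed

lemma distr_pair_snd':
  assumes M1: "prob_space M1" and M2: "sigma_finite_measure M2"
  shows "distr (M1 \<Otimes>\<^sub>M M2) M2 snd = M2"
proof (intro measure_eqI)
  interpret M1: prob_space M1 by fact
  interpret M2: sigma_finite_measure M2 by fact
  fix A assume A: "A \<in> sets (distr (M1 \<Otimes>\<^sub>M M2) M2 snd)"
  from A have "emeasure (distr (M1 \<Otimes>\<^sub>M M2) M2 snd) A = emeasure (M1 \<Otimes>\<^sub>M M2) (space M1 \<times> A)"
    by (auto simp add: emeasure_distr space_pair_measure dest: sets.sets_into_space intro!: arg_cong2[where f=emeasure])
  with A show "emeasure (distr (M1 \<Otimes>\<^sub>M M2) M2 snd) A = emeasure M2 A"
    by (simp add: M2.emeasure_pair_measure_Times M1.emeasure_space_1)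
qed simp

lemma abs_prod_le_sq: "\<bar>(x::real) * y\<bar> \<le> x\<^sup>2 + y\<^sup>2"
proof -
  have h: "0 \<le> (\<bar>x\<bar> - \<bar>y\<bar>)\<^sup>2" by simp
  have e: "(\<bar>x\<bar> - \<bar>y\<bar>)\<^sup>2 = x\<^sup>2 + y\<^sup>2 - 2 * (\<bar>x\<bar> * \<bar>y\<bar>)"
    by (simp add: power2_eq_square algebra_simps)
  have "0 \<le> \<bar>x\<bar> * \<bar>y\<bar>" by simp
  then have "\<bar>x\<bar> * \<bar>y\<bar> \<le> x\<^sup>2 + y\<^sup>2" using h e by linarith
  then show ?thesis by (simp add: abs_mult)
qed

lemma pair_sq:
  fixes M1 :: "'a measure" and M2 :: "'b measure" and a :: "'a \<Rightarrow> real" and b :: "'b \<Rightarrow> real"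
  assumes M1: "prob_space M1" and M2: "prob_space M2"
    and a: "integrable M1 a" "integrable M1 (\<lambda>x. (a x)\<^sup>2)" "integral\<^sup>L M1 a = 0"
    and b: "integrable M2 b" "integrable M2 (\<lambda>x. (b x)\<^sup>2)" "integral\<^sup>L M2 b = 0"
  shows "(\<integral>z. (a (fst z) - b (snd z) + c)\<^sup>2 \<partial>(M1 \<Otimes>\<^sub>M M2))
       = integral\<^sup>L M1 (\<lambda>x. (a x)\<^sup>2) + integral\<^sup>L M2 (\<lambda>x. (b x)\<^sup>2) + c\<^sup>2"
proof -
  interpret M1: prob_space M1 by fact
  interpret M2: prob_space M2 by fact
  interpret P: pair_prob_space M1 M2 by unfold_locales
  interpret P: prob_space "M1 \<Otimes>\<^sub>M M2" by (rule P.prob_space_axioms)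
  have df: "distr (M1 \<Otimes>\<^sub>M M2) M1 fst = M1" by (rule M2.distr_pair_fst)
  have ds: "distr (M1 \<Otimes>\<^sub>M M2) M2 snd = M2" by (rule distr_pair_snd'[OF M1 M2.sigma_finite_measure_axioms])
  have [measurable]: "a \<in> borel_measurable M1" "b \<in> borel_measurable M2" using a b by auto
  have fst_int: "integrable (M1 \<Otimes>\<^sub>M M2) (\<lambda>z. f (fst z))" "(\<integral>z. f (fst z) \<partial>(M1 \<Otimes>\<^sub>M M2)) = integral\<^sup>L M1 f"
    if "integrable M1 f" for f :: "'a \<Rightarrow> real"
  proof -
    have [measurable]: "f \<in> borel_measurable M1" using that by auto
    show "integrable (M1 \<Otimes>\<^sub>M M2) (\<lambda>z. f (fst z))"
      using that by (subst integrable_distr_eq[symmetric, where N=M1]) (auto simp: df)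
    show "(\<integral>z. f (fst z) \<partial>(M1 \<Otimes>\<^sub>M M2)) = integral\<^sup>L M1 f"
      by (subst integral_distr[symmetric, where N=M1]) (auto simp: df)
  qed
  have snd_int: "integrable (M1 \<Otimes>\<^sub>M M2) (\<lambda>z. f (snd z))" "(\<integral>z. f (snd z) \<partial>(M1 \<Otimes>\<^sub>M M2)) = integral\<^sup>L M2 f"
    if "integrable M2 f" for f :: "'b \<Rightarrow> real"
  proof -
    have [measurable]: "f \<in> borel_measurable M2" using that by auto
    show "integrable (M1 \<Otimes>\<^sub>M M2) (\<lambda>z. f (snd z))"
      using that by (subst integrable_distr_eq[symmetric, where N=M2]) (auto simp: ds)
    show "(\<integral>z. f (snd z) \<partial>(M1 \<Otimes>\<^sub>M M2)) = integral\<^sup>L M2 f"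
      by (subst integral_distr[symmetric, where N=M2]) (auto simp: ds)
  qed
  note ia = fst_int[OF a(1)] and ia2 = fst_int[OF a(2)] and ib = snd_int[OF b(1)] and ib2 = snd_int[OF b(2)]
  have iab: "integrable (M1 \<Otimes>\<^sub>M M2) (\<lambda>z. a (fst z) * b (snd z))"
  proof (rule Bochner_Integration.integrable_bound[OF Bochner_Integration.integrable_add[OF ia2(1) ib2(1)]])
    show "(\<lambda>z. a (fst z) * b (snd z)) \<in> borel_measurable (M1 \<Otimes>\<^sub>M M2)" by measurable
    show "AE z in M1 \<Otimes>\<^sub>M M2. norm (a (fst z) * b (snd z)) \<le> norm ((a (fst z))\<^sup>2 + (b (snd z))\<^sup>2)"
    proof (intro AE_I2)
      fix z
      have "\<bar>a (fst z) * b (snd z)\<bar> \<le> (a (fst z))\<^sup>2 + (b (snd z))\<^sup>2"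
        by (rule abs_prod_le_sq)
      then show "norm (a (fst z) * b (snd z)) \<le> norm ((a (fst z))\<^sup>2 + (b (snd z))\<^sup>2)" by simp
    qed
  qed
  have cross: "(\<integral>z. a (fst z) * b (snd z) \<partial>(M1 \<Otimes>\<^sub>M M2)) = 0"
  proof -
    have "(\<integral>z. a (fst z) * b (snd z) \<partial>(M1 \<Otimes>\<^sub>M M2)) = (\<integral>x. (\<integral>y. a x * b y \<partial>M2) \<partial>M1)"
      using P.integral_fst'[OF iab] by simp
    also have "\<dots> = 0" using b(3) by simp
    finally show ?thesis .
  qed
  have "(\<integral>z. (a (fst z) - b (snd z) + c)\<^sup>2 \<partial>(M1 \<Otimes>\<^sub>M M2))
     = (\<integral>z. ((a (fst z))\<^sup>2 + (b (snd z))\<^sup>2 + (c\<^sup>2 + (2 * c * a (fst z) - 2 * c * b (snd z) - 2 * (a (fst z) * b (snd z))))) \<partial>(M1 \<Otimes>\<^sub>M M2))"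
    by (rule Bochner_Integration.integral_cong) (simp_all add: power2_eq_square algebra_simps)
  also have "\<dots> = integral\<^sup>L M1 (\<lambda>x. (a x)\<^sup>2) + integral\<^sup>L M2 (\<lambda>x. (b x)\<^sup>2) + c\<^sup>2"
    using ia ia2 ib ib2 iab cross a(3) b(3) P.prob_space
    by (simp add: Bochner_Integration.integral_add Bochner_Integration.integral_diff)
  finally show ?thesis .
qed

lemma ce_zero:
  fixes M :: "'a measure" and N :: "'b measure" and s :: "'a \<Rightarrow> 'b" and Z :: "'a \<Rightarrow> real"
    and g :: "'b \<Rightarrow> real"
  assumes M: "prob_space M" and s: "s \<in> measurable M N" and Z: "integrable M Z"
    and hB: "\<And>B. B \<in> sets N \<Longrightarrow> (\<integral>x. indicator B (s x) * Z x \<partial>M) = 0"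
    and g: "g \<in> borel_measurable N" and gZ: "integrable M (\<lambda>x. g (s x) * Z x)"
  shows "(\<integral>x. g (s x) * Z x \<partial>M) = 0"
proof -
  interpret prob_space M by fact
  define F where "F = vimage_algebra (space M) s N"
  have sp: "s \<in> space M \<rightarrow> space N" using s by (auto dest: measurable_space)
  have sF: "sets F = {s -` B \<inter> space M | B. B \<in> sets N}"
    unfolding F_def by (rule sets_vimage_algebra2[OF sp])
  have sub: "subalgebra M F"
  proof -
    have "sets F \<subseteq> sets M" using s unfolding sF by (auto intro: measurable_sets)
    moreover have "space F = space M" by (simp add: F_def)
    ultimately show ?thesis unfolding subalgebra_def by simp
  qed
  interpret finite_measure_subalgebra M F
    by unfold_locales (rule sub)
  have [measurable]: "Z \<in> borel_measurable M" using Z by auto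
  have sFm: "s \<in> measurable F N" unfolding F_def by (rule measurable_vimage_algebra1[OF sp])
  have gF: "(\<lambda>x. g (s x)) \<in> borel_measurable F" using measurable_comp[OF sFm g] by (simp add: comp_def)
  have AE0: "AE x in M. real_cond_exp M F Z x = 0"
  proof (rule real_cond_exp_charact)
    fix A assume "A \<in> sets F"
    then obtain B where B: "B \<in> sets N" "A = s -` B \<inter> space M" using sF by auto
    have "(\<integral>x\<in>A. Z x \<partial>M) = (\<integral>x. indicator B (s x) * Z x \<partial>M)"
      unfolding set_lebesgue_integral_def
      by (rule Bochner_Integration.integral_cong) (auto simp: B indicator_def)
    then show "(\<integral>x\<in>A. Z x \<partial>M) = (\<integral>x\<in>A. 0 \<partial>M)" using hB[OF B(1)] by (simp add: set_lebesgue_integral_def)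
  qed (auto simp: Z)
  have "(\<integral>x. g (s x) * Z x \<partial>M) = (\<integral>x. g (s x) * real_cond_exp M F Z x \<partial>M)"
    using real_cond_exp_intg(2)[OF gZ gF] by simp
  also have "\<dots> = (\<integral>x. 0 \<partial>M)"
  proof (rule integral_cong_AE)
    show "(\<lambda>x. g (s x) * real_cond_exp M F Z x) \<in> borel_measurable M"
      using real_cond_exp_intg(1)[OF gZ gF] by auto
    show "AE x in M. g (s x) * real_cond_exp M F Z x = 0" using AE0 by eventually_elim simp
  qed simp
  finally show ?thesis by simp
qed

lemma integrable_from_truncations:
  fixes M :: "'a measure" and N :: "'b measure" and s :: "'a \<Rightarrow> 'b" and p :: "'b \<Rightarrow> real"
  assumes M: "prob_space M" and s[measurable]: "s \<in> measurable M N" and p[measurable]: "p \<in> borel_measurable N"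
    and pos: "\<And>y. 0 \<le> p y"
    and bnd: "\<And>B. B \<in> sets N \<Longrightarrow> (\<integral>x. indicator B (s x) * p (s x) \<partial>M) \<le> 1"
  shows "integrable M (\<lambda>x. p (s x))"
proof -
  interpret prob_space M by fact
  define B where "B n = {y \<in> space N. p y \<le> real n}" for n :: nat
  have Bs[measurable]: "B n \<in> sets N" for n unfolding B_def by measurable
  define f where "f n x = ennreal (indicator (B n) (s x) * p (s x))" for n x
  have fm[measurable]: "f n \<in> borel_measurable M" for n unfolding f_def by measurable
  have int_n: "integrable M (\<lambda>x. indicator (B n) (s x) * p (s x))" for n
  proof (rule integrable_const_bound[where B="real n"])
    show "AE x in M. norm (indicator (B n) (s x) * p (s x)) \<le> real n"
      using pos by (intro AE_I2) (auto simp: B_def indicator_def)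
  qed measurable
  have fn: "integral\<^sup>N M (f n) \<le> 1" for n
  proof -
    have "integral\<^sup>N M (f n) = ennreal (\<integral>x. indicator (B n) (s x) * p (s x) \<partial>M)"
      unfolding f_def using pos by (intro nn_integral_eq_integral[OF int_n]) auto
    also have "\<dots> \<le> 1" using bnd[OF Bs] by simp
    finally show ?thesis .
  qed
  have inc: "incseq f"
  proof (intro monoI le_funI)
    fix m n :: nat and x assume "m \<le> n"
    then have "B m \<subseteq> B n" by (auto simp: B_def)
    then show "f m x \<le> f n x" using pos[of "s x"]
      by (auto simp: f_def indicator_def intro!: ennreal_leI)
  qed
  have sup: "(SUP n. f n x) = ennreal (p (s x))" if x: "x \<in> space M" for x
  proof (rule antisym)
    show "(SUP n. f n x) \<le> ennreal (p (s x))"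
      using pos[of "s x"] by (intro SUP_least) (auto simp: f_def indicator_def intro!: ennreal_leI)
    obtain n :: nat where n: "p (s x) \<le> real n" using real_arch_simple by blast
    have "s x \<in> space N" by (rule measurable_space[OF s x])
    then have "f n x = ennreal (p (s x))" using n by (auto simp: f_def B_def)
    then show "ennreal (p (s x)) \<le> (SUP n. f n x)" by (metis SUP_upper UNIV_I)
  qed
  have "(\<integral>\<^sup>+x. ennreal (p (s x)) \<partial>M) = (\<integral>\<^sup>+x. (SUP n. f n x) \<partial>M)"
    using sup by (intro nn_integral_cong) auto
  also have "\<dots> = (SUP n. integral\<^sup>N M (f n))"
    by (rule nn_integral_monotone_convergence_SUP[OF inc fm])
  also have "\<dots> \<le> 1" using fn by (intro SUP_least) auto
  finally have "(\<integral>\<^sup>+x. ennreal (p (s x)) \<partial>M) < \<infinity>" by (simp add: le_less_trans)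
  then show ?thesis using pos by (intro integrableI_nonneg) auto
qed

lemma integrable_sq_shift:
  fixes f :: "'a \<Rightarrow> real"
  assumes M: "prob_space M" and f: "integrable M f" and f2: "integrable M (\<lambda>x. (f x)\<^sup>2)"
  shows "integrable M (\<lambda>x. (f x - c)\<^sup>2)"
proof -
  interpret prob_space M by fact
  have e: "(\<lambda>x. (f x - c)\<^sup>2) = (\<lambda>x. (f x)\<^sup>2 - 2 * c * f x + c\<^sup>2)"
    by (simp add: power2_eq_square algebra_simps)
  show ?thesis unfolding e using f f2 by auto
qed

lemma integrable_prod_sq:
  fixes f g :: "'a \<Rightarrow> real"
  assumes f: "integrable M f" "integrable M (\<lambda>x. (f x)\<^sup>2)" and g: "integrable M g" "integrable M (\<lambda>x. (g x)\<^sup>2)"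
  shows "integrable M (\<lambda>x. f x * g x)"
proof (rule Bochner_Integration.integrable_bound[OF Bochner_Integration.integrable_add[OF f(2) g(2)]])
  show "(\<lambda>x. f x * g x) \<in> borel_measurable M" using f g by auto
  show "AE x in M. norm (f x * g x) \<le> norm ((f x)\<^sup>2 + (g x)\<^sup>2)"
    using abs_prod_le_sq by (intro AE_I2) simp
qed

lemma lin_comb_var:
  fixes f g :: "'a \<Rightarrow> real" and \<alpha> \<beta> :: real
  assumes M: "prob_space M" and f: "integrable M f" "integrable M (\<lambda>x. (f x)\<^sup>2)"
    and g: "integrable M g" "integrable M (\<lambda>x. (g x)\<^sup>2)"
  defines "U \<equiv> (\<lambda>x. \<alpha> * (f x - integral\<^sup>L M f) + \<beta> * (g x - integral\<^sup>L M g))"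
  shows "integrable M U" "integrable M (\<lambda>x. (U x)\<^sup>2)" "integral\<^sup>L M U = 0"
    "integral\<^sup>L M (\<lambda>x. (U x)\<^sup>2) = \<alpha>\<^sup>2 * Var M f + \<beta>\<^sup>2 * Var M g + 2 * \<alpha> * \<beta> * Cov M f g"
proof -
  interpret prob_space M by fact
  let ?a = "\<lambda>x. f x - integral\<^sup>L M f" and ?b = "\<lambda>x. g x - integral\<^sup>L M g"
  have ia: "integrable M ?a" "integrable M (\<lambda>x. (?a x)\<^sup>2)" using f integrable_sq_shift[OF M f] by auto
  have ib: "integrable M ?b" "integrable M (\<lambda>x. (?b x)\<^sup>2)" using g integrable_sq_shift[OF M g] by auto
  have iab: "integrable M (\<lambda>x. ?a x * ?b x)" by (rule integrable_prod_sq[OF ia ib])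
  show "integrable M U" unfolding U_def using ia ib by auto
  show "integral\<^sup>L M U = 0" unfolding U_def using f g by (simp add: prob_space)
  have e: "(\<lambda>x. (U x)\<^sup>2) = (\<lambda>x. \<alpha>\<^sup>2 * (?a x)\<^sup>2 + \<beta>\<^sup>2 * (?b x)\<^sup>2 + 2 * \<alpha> * \<beta> * (?a x * ?b x))"
    unfolding U_def by (simp add: power2_eq_square algebra_simps)
  show "integrable M (\<lambda>x. (U x)\<^sup>2)" unfolding e using ia ib iab by auto
  show "integral\<^sup>L M (\<lambda>x. (U x)\<^sup>2) = \<alpha>\<^sup>2 * Var M f + \<beta>\<^sup>2 * Var M g + 2 * \<alpha> * \<beta> * Cov M f g"
    unfolding e Var_def Cov_def using ia ib iab by simp
qed

theorem lemma1:
  fixes MSt :: "'s measure"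
    and Pe :: "('s \<times> bool \<times> real) measure" and Ph :: "('s \<times> real) measure"
    and re re_star pr pr_star :: "bool \<Rightarrow> 's \<Rightarrow> real"
    and rh rh_star mu mu_star :: "'s \<Rightarrow> real"
    and ne nh :: nat and w :: real
  assumes Pe: "prob_space Pe" "sets Pe = sets (MSt \<Otimes>\<^sub>M (count_space UNIV \<Otimes>\<^sub>M borel))"
    and Ph: "prob_space Ph" "sets Ph = sets (MSt \<Otimes>\<^sub>M borel)"
    and sizes: "even ne" "ne > 0" "even nh" "nh > 0"
    and w: "0 \<le> w" "w \<le> 1"
    \<comment> \<open>the true nuisance functions\<close>
    and true_re: "is_reward_fn_e MSt Pe re_star"
    and true_pi: "is_propensity MSt Pe pr_star"
    and true_rh: "is_reward_fn_h MSt Ph rh_star"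
    and true_mu: "is_density_ratio MSt Pe Ph mu_star"
    \<comment> \<open>working models (fixed, measurable; positive propensity model)\<close>
    and meas_models: "\<And>a. re a \<in> borel_measurable MSt" "\<And>a. pr a \<in> borel_measurable MSt"
      "rh \<in> borel_measurable MSt" "mu \<in> borel_measurable MSt"
    and pi_pos: "\<And>a s. 0 < pr a s"
    \<comment> \<open>(A3)\<close>
    and A3: "(re = re_star \<and> rh = rh_star) \<or> (pr = pr_star \<and> mu = mu_star)"
    \<comment> \<open>moment conditions\<close>
    and int_e: "integrable Pe (\<lambda>x. snd (snd x))"
      "\<And>a. integrable Pe (\<lambda>x. re_star a (fst x))"
      "\<And>a. integrable Pe (\<lambda>x. re a (fst x))"
      "integrable Pe (\<lambda>x. rh_star (fst x))"
      "integrable Pe (\<lambda>x. rh (fst x))"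
      "\<And>a. integrable Pe (\<lambda>x. nu pr a (fst (snd x)) (fst x) * snd (snd x))"
      "\<And>a. integrable Pe (\<lambda>x. nu pr a (fst (snd x)) (fst x) * re (fst (snd x)) (fst x))"
      "\<And>a. integrable Pe (\<lambda>x. nu pr a (fst (snd x)) (fst x) * re_star (fst (snd x)) (fst x))"
      "integrable Pe (\<lambda>x. (psi_e re pr x)\<^sup>2)"
      "integrable Pe (\<lambda>x. (psi_h1 re rh pr x)\<^sup>2)"
    and int_h: "integrable Ph (\<lambda>x. snd x)"
      "integrable Ph (\<lambda>x. rh_star (fst x))"
      "integrable Ph (\<lambda>x. rh (fst x))"
      "integrable Ph (\<lambda>x. mu (fst x) * snd x)"
      "integrable Ph (\<lambda>x. mu (fst x) * rh (fst x))"
      "integrable Ph (\<lambda>x. mu (fst x) * rh_star (fst x))"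
      "integrable Ph (\<lambda>x. (psi_h2 rh mu x)\<^sup>2)"
  defines "tau_e \<equiv> (\<integral>x. re_star True (fst x) - re_star False (fst x) \<partial>Pe)"
    and "b_h \<equiv> (\<integral>x. re_star False (fst x) \<partial>Pe) - (\<integral>x. rh_star (fst x) \<partial>Pe)"
  shows "(\<integral>D. (tau_hat_w w ne nh re rh pr mu (fst D) (snd D) - tau_e)\<^sup>2 \<partial>(data_law ne nh Pe Ph))
       = 2 * w\<^sup>2 / real ne * Var Pe (psi_e re pr)
       + 2 * (1 - w)\<^sup>2 / real ne * Var Pe (psi_h1 re rh pr)
       + 2 * (1 - w)\<^sup>2 / real nh * Var Ph (psi_h2 rh mu)
       + 4 * w * (1 - w) / real ne * Cov Pe (psi_e re pr) (psi_h1 re rh pr)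
       + (1 - w)\<^sup>2 * b_h\<^sup>2"
proof -
  interpret Pe: prob_space Pe by (rule Pe(1))
  interpret Ph: prob_space Ph by (rule Ph(1))
  have mS[measurable]: "fst \<in> measurable Pe MSt"
    by (subst measurable_cong_sets[OF Pe(2) refl]) (rule measurable_fst)
  have mA[measurable]: "(\<lambda>x. fst (snd x)) \<in> measurable Pe (count_space UNIV)"
    by (subst measurable_cong_sets[OF Pe(2) refl]) measurable
  have mR[measurable]: "(\<lambda>x. snd (snd x)) \<in> borel_measurable Pe"
    by (subst measurable_cong_sets[OF Pe(2) refl]) measurable
  have mSh[measurable]: "fst \<in> measurable Ph MSt"
    by (subst measurable_cong_sets[OF Ph(2) refl]) (rule measurable_fst)
  have mRh[measurable]: "snd \<in> borel_measurable Ph"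
    by (subst measurable_cong_sets[OF Ph(2) refl]) measurable
  have [measurable]: "re_star a \<in> borel_measurable MSt" for a using true_re by (simp add: is_reward_fn_e_def)
  have [measurable]: "pr_star a \<in> borel_measurable MSt" for a using true_pi by (simp add: is_propensity_def)
  have [measurable]: "rh_star \<in> borel_measurable MSt" using true_rh by (simp add: is_reward_fn_h_def)
  have [measurable]: "mu_star \<in> borel_measurable MSt" using true_mu by (simp add: is_density_ratio_def)
  note meas_models[measurable]
  have ind_int: "integrable M (\<lambda>x. indicator S x * f x)"
    if "integrable M f" "(\<lambda>x. indicator S x * f x) \<in> borel_measurable M" for M :: "'z measure" and S and f :: "'z \<Rightarrow> real"
    by (rule Bochner_Integration.integrable_bound[OF that(1) that(2)]) (auto simp: indicator_def)
  have ind_int2: "integrable M (\<lambda>x. indicator S (t x) * f x)"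
    if "integrable M f" "(\<lambda>x. indicator S (t x) * f x) \<in> borel_measurable M"
    for M :: "'z measure" and S and t :: "'z \<Rightarrow> 'y" and f :: "'z \<Rightarrow> real"
    by (rule Bochner_Integration.integrable_bound[OF that(1) that(2)]) (auto simp: indicator_def)
  define Z where "Z a x = indicator {x. fst (snd x) = a} x * (snd (snd x) - re_star a (fst x))" for a x
  have Zint: "integrable Pe (Z a)" for a
  proof -
    have "integrable Pe (\<lambda>x. snd (snd x) - re_star a (fst x))" using int_e(1,2) by auto
    then show ?thesis unfolding Z_def by (intro ind_int) measurable
  qed
  have hBe: "(\<integral>x. indicator B (fst x) * Z a x \<partial>Pe) = 0" if B: "B \<in> sets MSt" for a B
  proof -
    have [measurable]: "B \<in> sets MSt" by fact
    let ?S = "{x. fst (snd x) = a \<and> fst x \<in> B}"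
    have i1: "integrable Pe (\<lambda>x. indicator ?S x * snd (snd x))" using int_e(1) by (intro ind_int) measurable
    have i2: "integrable Pe (\<lambda>x. indicator ?S x * re_star a (fst x))" using int_e(2) by (intro ind_int) measurable
    have "(\<integral>x. indicator B (fst x) * Z a x \<partial>Pe)
        = (\<integral>x. indicator ?S x * snd (snd x) - indicator ?S x * re_star a (fst x) \<partial>Pe)"
      by (rule Bochner_Integration.integral_cong) (auto simp: Z_def indicator_def)
    also have "\<dots> = 0" using i1 i2 true_re B by (simp add: is_reward_fn_e_def)
    finally show ?thesis .
  qed
  have ceZ: "(\<integral>x. g (fst x) * Z a x \<partial>Pe) = 0"
    if "g \<in> borel_measurable MSt" "integrable Pe (\<lambda>x. g (fst x) * Z a x)" for g a
    by (rule ce_zero[OF Pe(1) mS Zint hBe that])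

  define Zh where "Zh y = snd y - rh_star (fst y)" for y
  have Zhint: "integrable Ph Zh" unfolding Zh_def using int_h(1,2) by auto
  have hBh: "(\<integral>y. indicator B (fst y) * Zh y \<partial>Ph) = 0" if B: "B \<in> sets MSt" for B
  proof -
    have [measurable]: "B \<in> sets MSt" by fact
    have i1: "integrable Ph (\<lambda>y. indicator B (fst y) * snd y)" using int_h(1) by (intro ind_int2) measurable
    have i2: "integrable Ph (\<lambda>y. indicator B (fst y) * rh_star (fst y))" using int_h(2) by (intro ind_int2) measurable
    have "(\<integral>y. indicator B (fst y) * Zh y \<partial>Ph)
        = (\<integral>y. indicator B (fst y) * snd y - indicator B (fst y) * rh_star (fst y) \<partial>Ph)"
      by (rule Bochner_Integration.integral_cong) (auto simp: Zh_def algebra_simps)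
    also have "\<dots> = 0" using i1 i2 true_rh B by (simp add: is_reward_fn_h_def)
    finally show ?thesis .
  qed
  have ceZh: "(\<integral>y. g (fst y) * Zh y \<partial>Ph) = 0"
    if "g \<in> borel_measurable MSt" "integrable Ph (\<lambda>y. g (fst y) * Zh y)" for g
    by (rule ce_zero[OF Ph(1) mSh Zhint hBh that])
  define D where "D a x = nu pr a (fst (snd x)) (fst x) * snd (snd x)
      - nu pr a (fst (snd x)) (fst x) * re (fst (snd x)) (fst x)" for a x
  have Dint: "integrable Pe (D a)" for a unfolding D_def using int_e(6,7) by auto
  have psi_e_eq: "psi_e re pr x = re True (fst x) - re False (fst x) + D True x - D False x" for x
    by (cases x) (auto simp: psi_e_def D_def algebra_simps)
  have psi_h1_eq: "psi_h1 re rh pr x = re True (fst x) + D True x - rh (fst x)" for x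
    by (cases x) (auto simp: psi_h1_def D_def algebra_simps)
  have psi_h2_eq: "psi_h2 rh mu y = mu (fst y) * snd y - mu (fst y) * rh (fst y)" for y
    by (cases y) (auto simp: psi_h2_def algebra_simps)
  have iE: "integrable Pe (psi_e re pr)" unfolding psi_e_eq[abs_def] using Dint int_e(3) by auto
  have iH1: "integrable Pe (psi_h1 re rh pr)" unfolding psi_h1_eq[abs_def] using Dint int_e(3,5) by auto
  have iH2: "integrable Ph (psi_h2 rh mu)" unfolding psi_h2_eq[abs_def] using int_h(4,5) by auto
  have EE: "integral\<^sup>L Pe (psi_e re pr) = (\<integral>x. re True (fst x) \<partial>Pe) - (\<integral>x. re False (fst x) \<partial>Pe)
      + integral\<^sup>L Pe (D True) - integral\<^sup>L Pe (D False)"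
    unfolding psi_e_eq[abs_def] using Dint int_e(3) by simp
  have EH1: "integral\<^sup>L Pe (psi_h1 re rh pr) = (\<integral>x. re True (fst x) \<partial>Pe) + integral\<^sup>L Pe (D True)
      - (\<integral>x. rh (fst x) \<partial>Pe)"
    unfolding psi_h1_eq[abs_def] using Dint int_e(3,5) by simp
  have EH2: "integral\<^sup>L Ph (psi_h2 rh mu) = (\<integral>y. mu (fst y) * snd y \<partial>Ph) - (\<integral>y. mu (fst y) * rh (fst y) \<partial>Ph)"
    unfolding psi_h2_eq[abs_def] using int_h(4,5) by simp
  have tau_eq: "tau_e = (\<integral>x. re_star True (fst x) \<partial>Pe) - (\<integral>x. re_star False (fst x) \<partial>Pe)"
    unfolding tau_e_def using int_e(2) by simp
  have K: "integral\<^sup>L Pe (psi_e re pr) = tau_e \<and>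
      integral\<^sup>L Pe (psi_h1 re rh pr) - integral\<^sup>L Ph (psi_h2 rh mu) = tau_e + b_h"
    using A3
  proof
    assume c1: "re = re_star \<and> rh = rh_star"
    have D0: "integral\<^sup>L Pe (D a) = 0" for a
    proof -
      have e: "D a x = (\<lambda>s. 1 / pr a s) (fst x) * Z a x" for x
        using c1 by (auto simp: D_def Z_def nu_def algebra_simps)
      have e': "(\<lambda>x. (\<lambda>s. 1 / pr a s) (fst x) * Z a x) = D a" using e by auto
      have "(\<integral>x. (\<lambda>s. 1 / pr a s) (fst x) * Z a x \<partial>Pe) = 0"
        by (rule ceZ) (simp_all only: e' Dint, measurable)
      then show ?thesis by (simp only: e')
    qed
    have H0: "integral\<^sup>L Ph (psi_h2 rh mu) = 0"
    proof -
      have e: "psi_h2 rh mu y = mu (fst y) * Zh y" for y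
        using c1 by (cases y) (auto simp: psi_h2_def Zh_def)
      have e': "(\<lambda>y. mu (fst y) * Zh y) = psi_h2 rh mu" using e by auto
      have "(\<integral>y. mu (fst y) * Zh y \<partial>Ph) = 0"
        by (rule ceZh) (simp_all only: e' iH2, measurable)
      then show ?thesis by (simp only: e')
    qed
    show ?thesis using c1 D0 H0 unfolding EE EH1 tau_eq b_h_def by simp
  next
    assume c2: "pr = pr_star \<and> mu = mu_star"
    have tp: "is_propensity MSt Pe pr" using c2 true_pi by simp
    have tm: "is_density_ratio MSt Pe Ph mu" using c2 true_mu by simp
    have pint: "integrable Pe (\<lambda>x. pr a (fst x))" for a
    proof (rule integrable_from_truncations[OF Pe(1) mS])
      show "pr a \<in> borel_measurable MSt" by measurable
      show "0 \<le> pr a s" for s using pi_pos[of a s] by simp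
      fix B assume B: "B \<in> sets MSt"
      have "(\<integral>x. indicator B (fst x) * pr a (fst x) \<partial>Pe)
          = measure Pe {x \<in> space Pe. fst (snd x) = a \<and> fst x \<in> B}"
        using tp B by (simp add: is_propensity_def)
      also have "\<dots> \<le> 1" by (rule Pe.prob_le_1)
      finally show "(\<integral>x. indicator B (fst x) * pr a (fst x) \<partial>Pe) \<le> 1" .
    qed
    define Y where "Y a (x :: 's \<times> bool \<times> real) = indicator {x. fst (snd x) = a} x - pr a (fst x)" for a x
    have Yint: "integrable Pe (Y a)" for a
    proof -
      have "integrable Pe (\<lambda>x. indicator {x. fst (snd x) = a} x :: real)"
        by (rule Pe.integrable_const_bound[where B=1]) (auto simp: indicator_def)
      then show ?thesis unfolding Y_def using pint by auto
    qed
    have hBY: "(\<integral>x. indicator B (fst x) * Y a x \<partial>Pe) = 0" if B: "B \<in> sets MSt" for a B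
    proof -
      have [measurable]: "B \<in> sets MSt" by fact
      let ?S = "{x \<in> space Pe. fst (snd x) = a \<and> fst x \<in> B}"
      have Ss: "?S \<in> sets Pe" by measurable
      have i2: "integrable Pe (\<lambda>x. indicator B (fst x) * pr a (fst x))" using pint by (intro ind_int2) measurable
      have i1: "integrable Pe (indicator ?S :: _ \<Rightarrow> real)" using Ss by (intro integrable_real_indicator) (auto simp: Pe.emeasure_finite top.not_eq_extremum[symmetric])
      have "(\<integral>x. indicator B (fst x) * Y a x \<partial>Pe)
          = (\<integral>x. indicator ?S x - indicator B (fst x) * pr a (fst x) \<partial>Pe)"
        by (rule Bochner_Integration.integral_cong) (auto simp: Y_def indicator_def)
      also have "\<dots> = measure Pe ?S - (\<integral>x. indicator B (fst x) * pr a (fst x) \<partial>Pe)"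
        using i1 i2 Ss by simp
      also have "\<dots> = 0" using tp B by (simp add: is_propensity_def)
      finally show ?thesis .
    qed
    have ceY: "(\<integral>x. g (fst x) * Y a x \<partial>Pe) = 0"
      if "g \<in> borel_measurable MSt" "integrable Pe (\<lambda>x. g (fst x) * Y a x)" for g a
      by (rule ce_zero[OF Pe(1) mS Yint hBY that])
    have NU: "(\<integral>x. nu pr a (fst (snd x)) (fst x) * h (fst (snd x)) (fst x) \<partial>Pe) = (\<integral>x. h a (fst x) \<partial>Pe)"
      if hm: "h a \<in> borel_measurable MSt"
        and i1: "integrable Pe (\<lambda>x. nu pr a (fst (snd x)) (fst x) * h (fst (snd x)) (fst x))"
        and i2: "integrable Pe (\<lambda>x. h a (fst x))" for h a
    proof -
      have e: "(\<lambda>x. (\<lambda>s. h a s / pr a s) (fst x) * Y a x)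
          = (\<lambda>x. nu pr a (fst (snd x)) (fst x) * h (fst (snd x)) (fst x) - h a (fst x))"
      proof
        fix x :: "'s \<times> bool \<times> real"
        have "pr a (fst x) \<noteq> 0" using pi_pos[of a "fst x"] by simp
        then show "(\<lambda>s. h a s / pr a s) (fst x) * Y a x
            = nu pr a (fst (snd x)) (fst x) * h (fst (snd x)) (fst x) - h a (fst x)"
          by (auto simp: Y_def nu_def field_simps)
      qed
      have "(\<integral>x. (\<lambda>s. h a s / pr a s) (fst x) * Y a x \<partial>Pe) = 0"
        by (rule ceY) (simp_all only: e, use i1 i2 hm in auto)
      then show ?thesis unfolding e using i1 i2 by simp
    qed
    have DR: "integral\<^sup>L Pe (D a) = (\<integral>x. re_star a (fst x) \<partial>Pe) - (\<integral>x. re a (fst x) \<partial>Pe)" for a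
    proof -
      have e: "(\<lambda>x. (\<lambda>s. 1 / pr a s) (fst x) * Z a x)
          = (\<lambda>x. nu pr a (fst (snd x)) (fst x) * snd (snd x)
                - nu pr a (fst (snd x)) (fst x) * re_star (fst (snd x)) (fst x))"
        by (auto simp: Z_def nu_def algebra_simps)
      have "(\<integral>x. (\<lambda>s. 1 / pr a s) (fst x) * Z a x \<partial>Pe) = 0"
        by (rule ceZ) (simp_all only: e, use int_e(6,8) in auto)
      then have 1: "(\<integral>x. nu pr a (fst (snd x)) (fst x) * snd (snd x) \<partial>Pe)
          = (\<integral>x. nu pr a (fst (snd x)) (fst x) * re_star (fst (snd x)) (fst x) \<partial>Pe)"
        unfolding e using int_e(6,8) by simp
      have 2: "integral\<^sup>L Pe (D a) = (\<integral>x. nu pr a (fst (snd x)) (fst x) * snd (snd x) \<partial>Pe)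
          - (\<integral>x. nu pr a (fst (snd x)) (fst x) * re (fst (snd x)) (fst x) \<partial>Pe)"
        unfolding D_def using int_e(6,7) by simp
      show ?thesis unfolding 2 1 using NU[of re_star a] NU[of re a] int_e(2,3,7,8) by simp
    qed
    have dens: "(\<integral>y. mu (fst y) * f (fst y) \<partial>Ph) = (\<integral>x. f (fst x) \<partial>Pe)"
      if f[measurable]: "f \<in> borel_measurable MSt" for f
    proof -
      have mnn: "\<And>s. 0 \<le> mu s" and dd: "distr Pe MSt fst = density (distr Ph MSt fst) (\<lambda>s. ennreal (mu s))"
        using tm by (auto simp: is_density_ratio_def)
      have "(\<integral>x. f (fst x) \<partial>Pe) = integral\<^sup>L (distr Pe MSt fst) f"
        by (rule integral_distr[symmetric]) measurable
      also have "\<dots> = integral\<^sup>L (density (distr Ph MSt fst) (\<lambda>s. ennreal (mu s))) f" by (simp only: dd)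
      also have "\<dots> = integral\<^sup>L (distr Ph MSt fst) (\<lambda>s. mu s *\<^sub>R f s)"
        by (rule integral_density) (auto simp: mnn)
      also have "\<dots> = (\<integral>y. mu (fst y) * f (fst y) \<partial>Ph)"
        by (subst integral_distr) auto
      finally show ?thesis by simp
    qed
    have H2: "integral\<^sup>L Ph (psi_h2 rh mu) = (\<integral>x. rh_star (fst x) \<partial>Pe) - (\<integral>x. rh (fst x) \<partial>Pe)"
    proof -
      have e: "(\<lambda>y. mu (fst y) * Zh y) = (\<lambda>y. mu (fst y) * snd y - mu (fst y) * rh_star (fst y))"
        by (auto simp: Zh_def algebra_simps)
      have "(\<integral>y. mu (fst y) * Zh y \<partial>Ph) = 0"
        by (rule ceZh) (simp_all only: e, use int_h(4,6) in auto)
      then have "(\<integral>y. mu (fst y) * snd y \<partial>Ph) = (\<integral>y. mu (fst y) * rh_star (fst y) \<partial>Ph)"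
        unfolding e using int_h(4,6) by simp
      then show ?thesis unfolding EH2 using dens[of rh_star] dens[of rh] by simp
    qed
    show ?thesis using DR H2 unfolding EE EH1 tau_eq b_h_def by simp
  qed
  have K1: "integral\<^sup>L Pe (psi_e re pr) = tau_e" and K2: "integral\<^sup>L Pe (psi_h1 re rh pr) - integral\<^sup>L Ph (psi_h2 rh mu) = tau_e + b_h"
    using K by auto
  define mE where "mE = integral\<^sup>L Pe (psi_e re pr)"
  define mH1 where "mH1 = integral\<^sup>L Pe (psi_h1 re rh pr)"
  define mH2 where "mH2 = integral\<^sup>L Ph (psi_h2 rh mu)"
  define U where "U = (\<lambda>x. w * (psi_e re pr x - mE) + (1 - w) * (psi_h1 re rh pr x - mH1))"
  define V where "V = (\<lambda>y. (1 - w) * (psi_h2 rh mu y - mH2) + 0 * (psi_h2 rh mu y - mH2))"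
  note LU0 = lin_comb_var[OF Pe(1) iE int_e(9) iH1 int_e(10), of w "1 - w", folded mE_def mH1_def]
  note LV0 = lin_comb_var[OF Ph(1) iH2 int_h(7) iH2 int_h(7), of "1 - w" 0, folded mH2_def]
  have LU: "integrable Pe U" "integrable Pe (\<lambda>x. (U x)\<^sup>2)" "integral\<^sup>L Pe U = 0"
    "integral\<^sup>L Pe (\<lambda>x. (U x)\<^sup>2) = w\<^sup>2 * Var Pe (psi_e re pr) + (1 - w)\<^sup>2 * Var Pe (psi_h1 re rh pr)
       + 2 * w * (1 - w) * Cov Pe (psi_e re pr) (psi_h1 re rh pr)"
    using LU0 unfolding U_def by simp_all
  have LV: "integrable Ph V" "integrable Ph (\<lambda>x. (V x)\<^sup>2)" "integral\<^sup>L Ph V = 0"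
    "integral\<^sup>L Ph (\<lambda>x. (V x)\<^sup>2) = (1 - w)\<^sup>2 * Var Ph (psi_h2 rh mu)"
    using LV0 unfolding V_def by simp_all
  define Je where "Je = {ne div 2..<ne}"
  define Jh where "Jh = {nh div 2..<nh}"
  define kE where "kE = real (card Je)"
  define kH where "kH = real (card Jh)"
  have kE: "kE = real ne / 2" using sizes unfolding kE_def Je_def by (auto elim!: evenE)
  have kH: "kH = real nh / 2" using sizes unfolding kH_def Jh_def by (auto elim!: evenE)
  have kE0: "kE > 0" and kH0: "kH > 0" using kE kH sizes by auto
  define A where "A De = (\<Sum>i\<in>Je. U (De i)) / kE" for De :: "nat \<Rightarrow> 's \<times> bool \<times> real"
  define B where "B Dh = (\<Sum>j\<in>Jh. V (Dh j)) / kH" for Dh :: "nat \<Rightarrow> 's \<times> real"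
  define c where "c = (1 - w) * b_h"
  have Eq: "tau_hat_w w ne nh re rh pr mu (fst D) (snd D) - tau_e = A (fst D) - B (snd D) + c" for D
  proof -
    have SU: "(\<Sum>i\<in>Je. U (fst D i)) = w * (\<Sum>i\<in>Je. psi_e re pr (fst D i)) + (1 - w) * (\<Sum>i\<in>Je. psi_h1 re rh pr (fst D i))
        - kE * (w * mE + (1 - w) * mH1)"
      unfolding U_def kE_def by (simp add: sum.distrib sum_subtractf sum_distrib_left algebra_simps)
    have SV: "(\<Sum>j\<in>Jh. V (snd D j)) = (1 - w) * (\<Sum>j\<in>Jh. psi_h2 rh mu (snd D j)) - kH * ((1 - w) * mH2)"
      unfolding V_def kH_def by (simp add: sum.distrib sum_subtractf sum_distrib_left algebra_simps)
    have cc: "c = w * mE + (1 - w) * (mH1 - mH2) - tau_e"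
      unfolding c_def mE_def mH1_def mH2_def using K1 K2 by (simp add: algebra_simps)
    show ?thesis
      unfolding tau_hat_w_def tau_hat_e_def tau_hat_h_def second_half_mean_def A_def B_def
        SU SV cc Je_def[symmetric] Jh_def[symmetric] kE_def[symmetric] kH_def[symmetric]
      using kE0 kH0 by (simp add: field_simps)
  qed
  have M1: "prob_space (\<Pi>\<^sub>M i\<in>{..<ne}. Pe)" by (rule prob_space_PiM) (simp add: Pe(1))
  have M2: "prob_space (\<Pi>\<^sub>M i\<in>{..<nh}. Ph)" by (rule prob_space_PiM) (simp add: Ph(1))
  have JeS: "Je \<subseteq> {..<ne}" and JhS: "Jh \<subseteq> {..<nh}" by (auto simp: Je_def Jh_def)
  note SE = pim_sumsq[OF Pe(1) finite_lessThan JeS LU(1) LU(2) LU(3)]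
  note SH = pim_sumsq[OF Ph(1) finite_lessThan JhS LV(1) LV(2) LV(3)]
  have A2: "(\<lambda>De. (A De)\<^sup>2) = (\<lambda>De. (\<Sum>i\<in>Je. U (De i))\<^sup>2 / kE\<^sup>2)"
    by (simp add: A_def power_divide)
  have B2: "(\<lambda>Dh. (B Dh)\<^sup>2) = (\<lambda>Dh. (\<Sum>j\<in>Jh. V (Dh j))\<^sup>2 / kH\<^sup>2)"
    by (simp add: B_def power_divide)
  have Ai: "integrable (\<Pi>\<^sub>M i\<in>{..<ne}. Pe) A" "integrable (\<Pi>\<^sub>M i\<in>{..<ne}. Pe) (\<lambda>x. (A x)\<^sup>2)"
      "integral\<^sup>L (\<Pi>\<^sub>M i\<in>{..<ne}. Pe) A = 0"
    unfolding A2 using SE by (simp_all add: A_def[abs_def])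
  have Bi: "integrable (\<Pi>\<^sub>M i\<in>{..<nh}. Ph) B" "integrable (\<Pi>\<^sub>M i\<in>{..<nh}. Ph) (\<lambda>x. (B x)\<^sup>2)"
      "integral\<^sup>L (\<Pi>\<^sub>M i\<in>{..<nh}. Ph) B = 0"
    unfolding B2 using SH by (simp_all add: B_def[abs_def])
  have AI: "integral\<^sup>L (\<Pi>\<^sub>M i\<in>{..<ne}. Pe) (\<lambda>x. (A x)\<^sup>2) = integral\<^sup>L Pe (\<lambda>x. (U x)\<^sup>2) / kE"
    unfolding A2 using SE kE0 by (simp add: kE_def[symmetric] power2_eq_square)
  have BI: "integral\<^sup>L (\<Pi>\<^sub>M i\<in>{..<nh}. Ph) (\<lambda>x. (B x)\<^sup>2) = integral\<^sup>L Ph (\<lambda>x. (V x)\<^sup>2) / kH"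
    unfolding B2 using SH kH0 by (simp add: kH_def[symmetric] power2_eq_square)
  have "(\<integral>D. (tau_hat_w w ne nh re rh pr mu (fst D) (snd D) - tau_e)\<^sup>2 \<partial>(data_law ne nh Pe Ph))
      = (\<integral>D. (A (fst D) - B (snd D) + c)\<^sup>2 \<partial>((\<Pi>\<^sub>M i\<in>{..<ne}. Pe) \<Otimes>\<^sub>M (\<Pi>\<^sub>M i\<in>{..<nh}. Ph)))"
    unfolding data_law_def Eq ..
  also have "\<dots> = integral\<^sup>L Pe (\<lambda>x. (U x)\<^sup>2) / kE + integral\<^sup>L Ph (\<lambda>x. (V x)\<^sup>2) / kH + c\<^sup>2"
    using pair_sq[OF M1 M2 Ai Bi] AI BI by simp
  also have "\<dots> = 2 * w\<^sup>2 / real ne * Var Pe (psi_e re pr)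
       + 2 * (1 - w)\<^sup>2 / real ne * Var Pe (psi_h1 re rh pr)
       + 2 * (1 - w)\<^sup>2 / real nh * Var Ph (psi_h2 rh mu)
       + 4 * w * (1 - w) / real ne * Cov Pe (psi_e re pr) (psi_h1 re rh pr)
       + (1 - w)\<^sup>2 * b_h\<^sup>2"
    unfolding LU(4) LV(4) kE kH c_def using sizes by (simp add: field_simps power2_eq_square)
  finally show ?thesis .
qed

end
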